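(* Let inputs represent tuples of $C$ categorical components via a compositionally structured input representation with kernel value $\kappa_k$ for pairs of inputs sharing exactly $k$ components, where $\kappa_0<\kappa_k<\kappa_C$ for $0<k<C$. Pass these inputs through an infinite-width random neural network with (leaky) ReLU nonlinearity $\sigma(u)=A\min(u,0)+\max(u,0)$, $A\in[0,1)$, whose layer-$l$ kernel is given recursively by $K^{(0)}=K$ and $$K^{(l+1)}(x,x')=s^2\sqrt{K^{(l)}(x,x)K^{(l)}(x',x')}\;k\!\left(\frac{K^{(l)}(x,x')}{\sqrt{K^{(l)}(x,x)K^{(l)}(x',x')}}\right),\quad k(u)=\frac{(1-A)^2}{2\pi}\Big(\sqrt{1-u^2}+(\pi-\cos^{-1}u)\,u\Big)+Au,$$ with $s^2>0$ the weight variance. Let $S^{(L)}(k;C)$ denote the representational salience of overlap $k$ in layer $L$. Then as $L\to\infty$, $S^{(L)}(k;C)\to 0$ for every $k<C$ and $S^{(L)}(C;C)\to 1$.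
   Context: A representation is compositionally structured if the similarity of two inputs depends only on the number of shared components; each layer $K^{(l)}$ is then also compositionally structured, with similarity $\kappa^{(l)}_{|J|}$ for inputs sharing exactly the components in $J$. Representational salience of such a kernel: define recursively $\overline{S}(\emptyset):=\kappa_0$, $\overline{S}(J):=\kappa_{|J|}-\sum_{J'\subsetneq J}\overline{S}(J')$ for $J\subseteq\{1,\dots,C\}$, and $S(J):=\overline{S}(J)/\sum_{\emptyset\ne J'\subseteq\{1,\dots,C\}}\overline{S}(J')$; since this depends only on $|J|$, write $S(k;C):=S(J)$ for $|J|=k$. *)

theory Defs
  imports "HOL-Analysis.Analysis"
begin

definition karc :: "real \<Rightarrow> real \<Rightarrow> real" where
  "karc A u = (1 - A)^2 / (2 * pi) * (sqrt (1 - u^2) + (pi - arccos u) * u) + A * u"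

text \<open>The diagonal value K(x,x) equals \<kappa>_C for every input x,
  so the general recursion for K^(l+1) becomes the following recursion on the
  overlap values.\<close>
fun kappa_layer :: "real \<Rightarrow> real \<Rightarrow> nat \<Rightarrow> (nat \<Rightarrow> real) \<Rightarrow> nat \<Rightarrow> nat \<Rightarrow> real" where
  "kappa_layer A s2 C \<kappa> 0 k = \<kappa> k"
| "kappa_layer A s2 C \<kappa> (Suc l) k =
     s2 * sqrt (kappa_layer A s2 C \<kappa> l C * kappa_layer A s2 C \<kappa> l C)
        * karc A (kappa_layer A s2 C \<kappa> l k
                   / sqrt (kappa_layer A s2 C \<kappa> l C * kappa_layer A s2 C \<kappa> l C))"

function sbar :: "(nat \<Rightarrow> real) \<Rightarrow> nat set \<Rightarrow> real" where
  "sbar \<kappa> J = (if finite J then \<kappa> (card J) - (\<Sum>J'\<in>{J'. J' \<subset> J}. sbar \<kappa> J') else 0)"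
  by auto
termination
  by (relation "Wellfounded.measure (\<lambda>(\<kappa>, J). card J)")
     (auto intro: psubset_card_mono)

definition salience :: "(nat \<Rightarrow> real) \<Rightarrow> nat \<Rightarrow> nat set \<Rightarrow> real" where
  "salience \<kappa> C J = sbar \<kappa> J / (\<Sum>J'\<in>{J'. J' \<subseteq> {1..C} \<and> J' \<noteq> {}}. sbar \<kappa> J')"

end

theory Submission
  imports Defs
begin


definition hh :: "real \<Rightarrow> real" where
  "hh u = sqrt (1 - u^2) - u * arccos u"

lemma hh_cont: "continuous_on {-1..1} hh"
  unfolding hh_def
  by (intro continuous_intros continuous_on_mult continuous_on_id continuous_on_arccos'[THEN continuous_on_subset]) auto

lemma hh_deriv: assumes "-1 < z" "z < 1" shows "DERIV hh z :> - arccos z"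
proof -
  have s: "sqrt (1 - z^2) > 0" using assms by (simp add: abs_square_less_1)
  have d1: "DERIV (\<lambda>x. sqrt (1 - x^2)) z :> inverse (sqrt (1 - z^2)) / 2 * (- (2 * z))"
    by (rule DERIV_chain2[OF DERIV_real_sqrt]) (use s in \<open>auto intro!: derivative_eq_intros\<close>)
  have d2: "DERIV (\<lambda>x. x * arccos x) z :> 1 * arccos z + inverse (- sqrt (1 - z^2)) * z"
    by (rule DERIV_mult[OF DERIV_ident DERIV_arccos[OF assms]])
  have "DERIV hh z :> (inverse (sqrt (1 - z^2)) / 2 * (- (2 * z))) - (1 * arccos z + inverse (- sqrt (1 - z^2)) * z)"
    unfolding hh_def by (rule DERIV_diff[OF d1 d2])
  moreover have "(inverse (sqrt (1 - z^2)) / 2 * (- (2 * z))) - (1 * arccos z + inverse (- sqrt (1 - z^2)) * z) = - arccos z"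
    using s by (simp add: field_simps)
  ultimately show ?thesis by simp
qed

lemma hh_mvt:
  assumes "-1 \<le> u" "u < v" "v \<le> 1"
  shows "\<exists>z. u < z \<and> z < v \<and> hh v - hh u = (v - u) * (- arccos z)"
proof -
  have "continuous_on {u..v} hh" using hh_cont by (rule continuous_on_subset) (use assms in auto)
  moreover have "\<And>x. u < x \<Longrightarrow> x < v \<Longrightarrow> hh differentiable (at x)"
    using hh_deriv assms by (meson real_differentiable_def less_le_trans le_less_trans)
  ultimately obtain l z where z: "u < z" "z < v" "DERIV hh z :> l" "hh v - hh u = (v - u) * l"
    using MVT[OF assms(2)] by blast
  have "l = - arccos z" using DERIV_unique[OF z(3) hh_deriv] z assms by auto
  thus ?thesis using z by auto
qed

lemma hh_1: "hh 1 = 0" by (simp add: hh_def)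

lemma hh_bounds:
  assumes "-1 \<le> u" "u < 1"
  shows "hh u > 0" "hh u < pi * (1 - u)"
proof -
  obtain z where z: "u < z" "z < 1" "hh 1 - hh u = (1 - u) * (- arccos z)"
    using hh_mvt[OF assms] by auto
  have a1: "arccos z > 0" using arccos_less_arccos[of z 1] z assms by auto
  have a2: "arccos z < pi" using arccos_less_arccos[of "-1" z] z assms by auto
  have e: "hh u = (1 - u) * arccos z" using z hh_1 by simp
  show "hh u > 0" using e a1 assms by simp
  show "hh u < pi * (1 - u)" using e a2 assms by simp
qed

lemma hh_upper:
  assumes "0 \<le> u" "u \<le> 1"
  shows "hh u \<le> sqrt (1 - u^2) * (1 - u)"
proof -
  have "sqrt (1 - u^2) = sin (arccos u)" using assms by (simp add: sin_arccos)
  also have "\<dots> \<le> arccos u" by (rule sin_x_le_x) (use assms arccos_lbound in auto)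
  finally have "u * sqrt (1 - u^2) \<le> u * arccos u" using assms by (simp add: mult_left_mono)
  thus ?thesis unfolding hh_def by (simp add: algebra_simps)
qed

lemma g_mono:
  assumes "-1 \<le> u" "u \<le> v" "v \<le> 1"
  shows "u + hh u / pi \<le> v + hh v / pi"
proof (cases "u = v")
  case False
  then have "u < v" using assms by simp
  then obtain z where z: "u < z" "z < v" "hh v - hh u = (v - u) * (- arccos z)"
    using hh_mvt[OF assms(1) _ assms(3)] by auto
  have a2: "arccos z \<le> pi" using arccos_ubound[of z] z assms by simp
  have "(v - u) * arccos z \<le> (v - u) * pi" using a2 \<open>u < v\<close> by (simp add: mult_left_mono)
  hence "hh u - hh v \<le> (v - u) * pi" using z by (simp add: algebra_simps)
  hence "hh u + pi * u \<le> hh v + pi * v" by (simp add: algebra_simps)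
  hence "(hh u + pi * u) / pi \<le> (hh v + pi * v) / pi" by (intro divide_right_mono) auto
  moreover have "\<And>w. (hh w + pi * w) / pi = w + hh w / pi" by (simp add: field_simps)
  ultimately show ?thesis by simp
qed simp



definition FF :: "real \<Rightarrow> real \<Rightarrow> real" where
  "FF g u = u + g * hh u"

context
  fixes g :: real
  assumes g0: "0 < g" and g1: "g \<le> 1 / pi"
begin

lemma FF_props:
  assumes "-1 \<le> u" "u < 1"
  shows "u < FF g u" "FF g u < 1"
proof -
  have h: "hh u > 0" "hh u < pi * (1 - u)" using hh_bounds[OF assms] by auto
  show "u < FF g u" using h g0 by (simp add: FF_def)
  have "g * hh u \<le> (1/pi) * hh u" using g1 h by (intro mult_right_mono) auto
  also have "\<dots> < 1 - u" using h pi_gt_zero by (simp add: field_simps)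
  finally show "FF g u < 1" by (simp add: FF_def)
qed

lemma FF_1: "FF g 1 = 1" by (simp add: FF_def hh_1)

lemma FF_mono:
  assumes "-1 \<le> u" "u \<le> v" "v \<le> 1"
  shows "FF g u \<le> FF g v"
proof -
  have e: "\<And>w. FF g w = (1 - g * pi) * w + (g * pi) * (w + hh w / pi)"
    by (simp add: FF_def field_simps)
  have c: "0 \<le> 1 - g * pi" using g1 pi_gt_zero by (simp add: field_simps)
  have "(1 - g * pi) * u \<le> (1 - g * pi) * v" using c assms by (simp add: mult_left_mono)
  moreover have "(g * pi) * (u + hh u / pi) \<le> (g * pi) * (v + hh v / pi)"
    using g_mono[OF assms] g0 by (intro mult_left_mono) auto
  ultimately show ?thesis unfolding e by linarith
qed

lemma iter_range:
  assumes "-1 \<le> u" "u < 1"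
  shows "-1 \<le> (FF g ^^ n) u \<and> (FF g ^^ n) u < 1"
proof (induction n)
  case (Suc n)
  then have "(FF g ^^ n) u < FF g ((FF g ^^ n) u)" "FF g ((FF g ^^ n) u) < 1"
    using FF_props by auto
  then show ?case using Suc by simp
qed (use assms in simp)

lemma iter_1: "(FF g ^^ n) 1 = 1"
  by (induction n) (auto simp: FF_1)

lemma iter_range1:
  assumes "-1 \<le> u" "u \<le> 1"
  shows "-1 \<le> (FF g ^^ n) u \<and> (FF g ^^ n) u \<le> 1"
  using assms iter_range[of u n] iter_1[of n] by (cases "u = 1") auto

lemma iter_mono:
  assumes "-1 \<le> u" "u \<le> v" "v \<le> 1"
  shows "(FF g ^^ n) u \<le> (FF g ^^ n) v"
proof (induction n)
  case (Suc n)
  have "-1 \<le> (FF g ^^ n) u" "(FF g ^^ n) v \<le> 1"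
    using iter_range1[of u n] iter_range1[of v n] assms by auto
  then have "FF g ((FF g ^^ n) u) \<le> FF g ((FF g ^^ n) v)"
    using FF_mono[of "(FF g ^^ n) u" "(FF g ^^ n) v"] Suc.IH by blast
  then show ?case by simp
qed (use assms in simp)

lemma FF_cont: "continuous_on {-1..1} (FF g)"
  unfolding FF_def by (intro continuous_intros hh_cont)

lemma iter_tendsto:
  assumes "-1 \<le> u" "u < 1"
  shows "(\<lambda>n. (FF g ^^ n) u) \<longlonglongrightarrow> 1"
proof -
  let ?x = "\<lambda>n. (FF g ^^ n) u"
  have r: "\<And>n. -1 \<le> ?x n \<and> ?x n < 1" using iter_range[OF assms] by blast
  have inc: "incseq ?x"
  proof (rule incseq_SucI)
    fix n
    have "?x n < FF g (?x n)" using FF_props(1) r[of n] by blast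
    then show "?x n \<le> ?x (Suc n)" by simp
  qed
  have bd: "\<forall>i. ?x i \<le> 1"
  proof
    fix i show "?x i \<le> 1" using r[of i] by linarith
  qed
  obtain l where l: "?x \<longlonglongrightarrow> l" "\<forall>i. ?x i \<le> l"
    by (rule incseq_convergent[OF inc bd])
  have l1: "l \<le> 1" by (rule LIMSEQ_le_const2[OF l(1)]) (use bd in blast)
  have l0: "-1 \<le> l" using spec[OF l(2), of 0] r[of 0] by linarith
  show ?thesis
  proof (rule ccontr)
    assume "\<not> ?thesis"
    then have "l \<noteq> 1" using l(1) by auto
    then have "l < 1" using l1 by simp
    have "(\<lambda>n. FF g (?x n)) \<longlonglongrightarrow> FF g l"
    proof (rule continuous_on_tendsto_compose[OF FF_cont l(1)])
      show "l \<in> {-1..1}" using l0 l1 by simp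
      show "eventually (\<lambda>n. ?x n \<in> {-1..1}) sequentially"
        by (rule always_eventually, rule allI) (use r bd in \<open>simp\<close>)
    qed
    moreover have "(\<lambda>n. FF g (?x n)) = (\<lambda>n. ?x (Suc n))" by simp
    ultimately have "(\<lambda>n. ?x (Suc n)) \<longlonglongrightarrow> FF g l" by (simp only:)
    hence "FF g l = l" using LIMSEQ_unique[OF _ LIMSEQ_Suc[OF l(1)]] by blast
    thus False using FF_props(1)[OF l0 \<open>l < 1\<close>] by linarith
  qed
qed

lemma ratio_step:
  assumes "-1 \<le> u" "u < 1"
  shows "(\<lambda>n. (1 - (FF g ^^ Suc n) u) / (1 - (FF g ^^ n) u)) \<longlonglongrightarrow> 1"
proof -
  let ?x = "\<lambda>n. (FF g ^^ n) u"
  have r: "\<And>n. -1 \<le> ?x n \<and> ?x n < 1" using iter_range[OF assms] by blast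
  have t: "?x \<longlonglongrightarrow> 1" using iter_tendsto[OF assms] .
  have ev: "eventually (\<lambda>n. 0 \<le> ?x n) sequentially"
  proof -
    have "eventually (\<lambda>n. 0 < ?x n) sequentially" using order_tendstoD(1)[OF t] by simp
    then show ?thesis by (rule eventually_mono) (rule less_imp_le)
  qed
  have lo: "(\<lambda>n. 1 - g * sqrt (1 - (?x n)^2)) \<longlonglongrightarrow> 1 - g * sqrt (1 - 1^2)"
    by (intro tendsto_intros t)
  show ?thesis
  proof (rule tendsto_sandwich[OF _ _ _ tendsto_const])
    show "(\<lambda>n. 1 - g * sqrt (1 - (?x n)^2)) \<longlonglongrightarrow> 1" using lo by simp
    show "eventually (\<lambda>n. 1 - g * sqrt (1 - (?x n)^2) \<le> (1 - ?x (Suc n)) / (1 - ?x n)) sequentially"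
      using ev
    proof eventually_elim
      case (elim n)
      have p: "0 < 1 - ?x n" using r[of n] by simp
      have "hh (?x n) \<le> sqrt (1 - (?x n)^2) * (1 - ?x n)"
        using hh_upper[of "?x n"] elim r[of n] by auto
      hence "g * hh (?x n) \<le> g * (sqrt (1 - (?x n)^2) * (1 - ?x n))"
        using g0 by (intro mult_left_mono) auto
      hence "(1 - g * sqrt (1 - (?x n)^2)) * (1 - ?x n) \<le> 1 - ?x (Suc n)"
        by (simp add: FF_def algebra_simps)
      thus ?case using p by (simp add: field_simps)
    qed
    show "eventually (\<lambda>n. (1 - ?x (Suc n)) / (1 - ?x n) \<le> 1) sequentially"
    proof (rule always_eventually, rule allI)
      fix n
      have p: "0 < 1 - ?x n" using r[of n] by simp
      have "?x n < ?x (Suc n)" using FF_props r[of n] by simp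
      thus "(1 - ?x (Suc n)) / (1 - ?x n) \<le> 1" using p by (simp add: field_simps)
    qed
  qed
qed

lemma divmul_cancel: "b \<noteq> 0 \<Longrightarrow> c \<noteq> 0 \<Longrightarrow> a / b * (b / c) = a / (c::real)"
  by simp

lemma ratio_m:
  assumes "-1 \<le> u" "u < 1"
  shows "(\<lambda>n. (1 - (FF g ^^ (n + m)) u) / (1 - (FF g ^^ n) u)) \<longlonglongrightarrow> 1"
proof (induction m)
  case 0
  have "\<And>n. 1 - (FF g ^^ n) u \<noteq> 0" using iter_range[OF assms] by (metis less_irrefl right_minus_eq)
  then show ?case by simp
next
  case (Suc m)
  define x where "x = (\<lambda>n. (FF g ^^ n) u)"
  have nz: "\<And>n. 1 - x n \<noteq> 0" using iter_range[OF assms] unfolding x_def by (metis less_irrefl right_minus_eq)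
  have a: "(\<lambda>n. (1 - x (Suc (n + m))) / (1 - x (n + m))) \<longlonglongrightarrow> 1"
    using LIMSEQ_ignore_initial_segment[OF ratio_step[OF assms], of m] unfolding x_def by simp
  have ih: "(\<lambda>n. (1 - x (n + m)) / (1 - x n)) \<longlonglongrightarrow> 1" using Suc.IH unfolding x_def .
  have "(\<lambda>n. (1 - x (Suc (n + m))) / (1 - x (n + m)) * ((1 - x (n + m)) / (1 - x n))) \<longlonglongrightarrow> 1 * 1"
    by (intro tendsto_mult a ih)
  moreover have "(\<lambda>n. (1 - x (Suc (n + m))) / (1 - x (n + m)) * ((1 - x (n + m)) / (1 - x n)))
     = (\<lambda>n. (1 - x (n + Suc m)) / (1 - x n))"
  proof (rule ext)
    fix n
    have nb: "1 - x (n + m) \<noteq> 0" and nc: "1 - x n \<noteq> 0" using nz by auto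
    show "(1 - x (Suc (n + m))) / (1 - x (n + m)) * ((1 - x (n + m)) / (1 - x n))
     = (1 - x (n + Suc m)) / (1 - x n)" by (simp only: add_Suc_right divmul_cancel[OF nb nc])
  qed
  ultimately have "(\<lambda>n. (1 - x (n + Suc m)) / (1 - x n)) \<longlonglongrightarrow> 1" by simp
  then show ?case unfolding x_def .
qed

lemma ratio_cmp:
  assumes "-1 \<le> u" "u \<le> v" "v < 1"
  shows "(\<lambda>n. (1 - (FF g ^^ n) v) / (1 - (FF g ^^ n) u)) \<longlonglongrightarrow> 1"
proof -
  have uu: "u < 1" using assms by simp
  have "eventually (\<lambda>n. v < (FF g ^^ n) u) sequentially"
    using order_tendstoD(1)[OF iter_tendsto[OF assms(1) uu] assms(3)] .
  then obtain N where N: "\<And>n. n \<ge> N \<Longrightarrow> v < (FF g ^^ n) u"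
    unfolding eventually_sequentially by blast
  obtain m where m: "(FF g ^^ m) u \<ge> v" using N[of N] by (meson less_imp_le order_refl)
  show ?thesis
  proof (rule tendsto_sandwich[OF _ _ ratio_m[OF assms(1) uu, of m] tendsto_const])
    show "eventually (\<lambda>n. (1 - (FF g ^^ (n + m)) u) / (1 - (FF g ^^ n) u) \<le> (1 - (FF g ^^ n) v) / (1 - (FF g ^^ n) u)) sequentially"
    proof (rule always_eventually, rule allI)
      fix n
      have p: "0 < 1 - (FF g ^^ n) u" using iter_range[OF assms(1) uu] by simp
      have "(FF g ^^ (n + m)) u = (FF g ^^ n) ((FF g ^^ m) u)" by (simp add: funpow_add)
      also have "\<dots> \<ge> (FF g ^^ n) v"
        using iter_mono[of v "(FF g ^^ m) u" n] m iter_range[OF assms(1) uu, of m] assms by auto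
      finally show "(1 - (FF g ^^ (n + m)) u) / (1 - (FF g ^^ n) u) \<le> (1 - (FF g ^^ n) v) / (1 - (FF g ^^ n) u)"
        using p by (intro divide_right_mono) auto
    qed
    show "eventually (\<lambda>n. (1 - (FF g ^^ n) v) / (1 - (FF g ^^ n) u) \<le> 1) sequentially"
    proof (rule always_eventually, rule allI)
      fix n
      have p: "0 < 1 - (FF g ^^ n) u" using iter_range[OF assms(1) uu] by simp
      have "(FF g ^^ n) u \<le> (FF g ^^ n) v" using iter_mono assms by auto
      thus "(1 - (FF g ^^ n) v) / (1 - (FF g ^^ n) u) \<le> 1" using p by (simp add: field_simps)
    qed
  qed
qed

end


declare sbar.simps[simp del]

lemma sbar_eq: "finite J \<Longrightarrow> sbar \<kappa> J = \<kappa> (card J) - (\<Sum>J'\<in>{J'. J' \<subset> J}. sbar \<kappa> J')"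
  by (subst sbar.simps) simp

lemma fin_psub: "finite J \<Longrightarrow> finite {J'. J' \<subset> J}"
  by (rule finite_subset[of _ "Pow J"]) auto

lemma sbar_empty: "sbar \<kappa> {} = \<kappa> 0"
  by (subst sbar_eq) auto

lemma sbar_affine:
  "finite J \<Longrightarrow> sbar (\<lambda>k. a + b * \<mu> k) J = (if J = {} then a else 0) + b * sbar \<mu> J"
proof (induction "card J" arbitrary: J rule: less_induct)
  case less
  have IH: "\<And>J'. J' \<in> {J'. J' \<subset> J} \<Longrightarrow> sbar (\<lambda>k. a + b * \<mu> k) J' = (if J' = {} then a else 0) + b * sbar \<mu> J'"
    using less.hyps less.prems psubset_card_mono rev_finite_subset by (metis mem_Collect_eq psubset_imp_subset)
  have "sbar (\<lambda>k. a + b * \<mu> k) J = a + b * \<mu> (card J) - (\<Sum>J'\<in>{J'. J' \<subset> J}. (if J' = {} then a else 0) + b * sbar \<mu> J')"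
  proof -
    have "(\<Sum>J'\<in>{J'. J' \<subset> J}. sbar (\<lambda>k. a + b * \<mu> k) J') = (\<Sum>J'\<in>{J'. J' \<subset> J}. (if J' = {} then a else 0) + b * sbar \<mu> J')"
      by (rule sum.cong[OF refl IH])
    then show ?thesis using sbar_eq[OF less.prems, of "\<lambda>k. a + b * \<mu> k"] by simp
  qed
  also have "\<dots> = a + b * \<mu> (card J) - (\<Sum>J'\<in>{J'. J' \<subset> J}. (if J' = {} then a else 0)) - b * (\<Sum>J'\<in>{J'. J' \<subset> J}. sbar \<mu> J')"
    by (simp add: sum.distrib sum_distrib_left)
  also have "(\<Sum>J'\<in>{J'. J' \<subset> J}. (if J' = {} then a else 0)) = (if J = {} then 0 else a)"
    using sum.delta[OF fin_psub[OF less.prems], of "{}" "\<lambda>_. a"] by auto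
  finally have X: "sbar (\<lambda>k. a + b * \<mu> k) J = a + b * \<mu> (card J) - (if J = {} then 0 else a) - b * (\<Sum>J'\<in>{J'. J' \<subset> J}. sbar \<mu> J')" .
  have Y: "b * sbar \<mu> J = b * \<mu> (card J) - b * (\<Sum>J'\<in>{J'. J' \<subset> J}. sbar \<mu> J')"
    using sbar_eq[OF less.prems, of \<mu>] by (simp add: right_diff_distrib[symmetric])
  show ?case
  proof (cases "J = {}")
    case True then show ?thesis using X Y by (simp add: sbar_empty)
  next
    case False then show ?thesis using X Y by simp
  qed
qed

lemma sbar_const: "finite J \<Longrightarrow> sbar (\<lambda>_. c) J = (if J = {} then c else 0)"
  using sbar_affine[of J c 0 "\<lambda>_. 0"] by simp

lemma sbar_cong:
  "finite J \<Longrightarrow> \<forall>k\<le>card J. \<mu>1 k = \<mu>2 k \<Longrightarrow> sbar \<mu>1 J = sbar \<mu>2 J"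
proof (induction "card J" arbitrary: J rule: less_induct)
  case less
  have IH: "\<And>J'. J' \<in> {J'. J' \<subset> J} \<Longrightarrow> sbar \<mu>1 J' = sbar \<mu>2 J'"
  proof -
    fix J' assume "J' \<in> {J'. J' \<subset> J}"
    then have "J' \<subset> J" by simp
    then have c: "card J' < card J" "finite J'" using less.prems psubset_card_mono rev_finite_subset
      by (metis psubset_imp_subset)+
    then show "sbar \<mu>1 J' = sbar \<mu>2 J'" using less.hyps[OF c(1) c(2)] less.prems(2) by simp
  qed
  have "(\<Sum>J'\<in>{J'. J' \<subset> J}. sbar \<mu>1 J') = (\<Sum>J'\<in>{J'. J' \<subset> J}. sbar \<mu>2 J')"
    by (rule sum.cong[OF refl IH])
  then show ?case using sbar_eq[OF less.prems(1), of \<mu>1] sbar_eq[OF less.prems(1), of \<mu>2]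
      less.prems(2) by simp
qed

lemma sbar_tendsto:
  "finite J \<Longrightarrow> \<forall>k\<le>card J. (\<lambda>L. q L k) \<longlonglongrightarrow> r k \<Longrightarrow> (\<lambda>L. sbar (q L) J) \<longlonglongrightarrow> sbar r J"
proof (induction "card J" arbitrary: J rule: less_induct)
  case less
  have IH: "\<And>J'. J' \<in> {J'. J' \<subset> J} \<Longrightarrow> (\<lambda>L. sbar (q L) J') \<longlonglongrightarrow> sbar r J'"
  proof -
    fix J' assume "J' \<in> {J'. J' \<subset> J}"
    then have "J' \<subset> J" by simp
    then have c: "card J' < card J" "finite J'" using less.prems psubset_card_mono rev_finite_subset
      by (metis psubset_imp_subset)+
    then show "(\<lambda>L. sbar (q L) J') \<longlonglongrightarrow> sbar r J'" using less.hyps[OF c(1) c(2)] less.prems(2) by simp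
  qed
  have "(\<lambda>L. q L (card J) - (\<Sum>J'\<in>{J'. J' \<subset> J}. sbar (q L) J')) \<longlonglongrightarrow> r (card J) - (\<Sum>J'\<in>{J'. J' \<subset> J}. sbar r J')"
    using less.prems(2) IH by (intro tendsto_diff tendsto_sum) auto
  then show ?case using sbar_eq[OF less.prems(1)] by simp
qed

lemma sbar_denom:
  assumes "finite S"
  shows "(\<Sum>J'\<in>{J'. J' \<subseteq> S \<and> J' \<noteq> {}}. sbar \<mu> J') = \<mu> (card S) - \<mu> 0"
proof -
  have e1: "{J'. J' \<subseteq> S} = insert S {J'. J' \<subset> S}" by auto
  have "(\<Sum>J'\<in>{J'. J' \<subseteq> S}. sbar \<mu> J') = sbar \<mu> S + (\<Sum>J'\<in>{J'. J' \<subset> S}. sbar \<mu> J')"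
    unfolding e1 by (subst sum.insert) (use fin_psub[OF assms] in auto)
  also have "\<dots> = \<mu> (card S)" using sbar_eq[OF assms, of \<mu>] by simp
  finally have a: "(\<Sum>J'\<in>{J'. J' \<subseteq> S}. sbar \<mu> J') = \<mu> (card S)" .
  have e2: "{J'. J' \<subseteq> S \<and> J' \<noteq> {}} = {J'. J' \<subseteq> S} - {{}}" by auto
  have f: "finite {J'. J' \<subseteq> S}" using assms by simp
  show ?thesis unfolding e2 using sum_diff1[OF f, of "sbar \<mu>" "{}"] a sbar_empty by simp
qed




lemma aux_frac: "(P::real) > 0 \<Longrightarrow> P / 2 * (Q / (r * P)) = Q / (2 * r)"
  by (simp add: field_simps)

lemma karc_FF:
  fixes A :: real
  shows "karc A u = ((1 + A^2) / 2) * FF ((1 - A)^2 / (pi * (1 + A^2))) u"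
proof -
  have p: "1 + A^2 > 0" by (simp add: add_pos_nonneg)
  have "karc A u = (1 - A)^2 / (2 * pi) * hh u + ((1 + A^2) / 2) * u"
    unfolding karc_def hh_def by (simp add: field_simps power2_eq_square)
  also have "\<dots> = ((1 + A^2) / 2) * ((1 - A)^2 / (pi * (1 + A^2))) * hh u + ((1 + A^2) / 2) * u"
  proof -
    have "((1 + A^2) / 2) * ((1 - A)^2 / (pi * (1 + A^2))) = (1 - A)^2 / (2 * pi)"
      using p by (rule aux_frac)
    then show ?thesis by simp
  qed
  also have "\<dots> = ((1 + A^2) / 2) * FF ((1 - A)^2 / (pi * (1 + A^2))) u"
    unfolding FF_def by (simp add: algebra_simps)
  finally show ?thesis .
qed

theorem proposition4:
  fixes C :: nat and V :: "nat \<Rightarrow> 'v set" and \<phi> :: "(nat \<Rightarrow> 'v) \<Rightarrow> 'h::real_inner"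
    and \<kappa> :: "nat \<Rightarrow> real" and A s2 :: real
  assumes C_pos: "C \<ge> 1"
    and categorical: "\<forall>i\<in>{1..C}. \<exists>a b. a \<in> V i \<and> b \<in> V i \<and> a \<noteq> b"
    and comp_struct: "\<forall>x\<in>PiE {1..C} V. \<forall>x'\<in>PiE {1..C} V.
           inner (\<phi> x) (\<phi> x') = \<kappa> (card {i\<in>{1..C}. x i = x' i})"
    and between: "\<forall>k. 0 < k \<and> k < C \<longrightarrow> \<kappa> 0 < \<kappa> k \<and> \<kappa> k < \<kappa> C"
    and ends: "\<kappa> 0 < \<kappa> C"
    and A: "0 \<le> A" "A < 1"
    and s2: "s2 > 0"
  shows "(\<forall>J. J \<subseteq> {1..C} \<and> J \<noteq> {} \<and> card J < C \<longrightarrow>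
            (\<lambda>L. salience (kappa_layer A s2 C \<kappa> L) C J) \<longlonglongrightarrow> 0)
       \<and> (\<lambda>L. salience (kappa_layer A s2 C \<kappa> L) C {1..C}) \<longlonglongrightarrow> 1"
proof -
  obtain a where a: "\<forall>i\<in>{1..C}. \<exists>b. a i \<in> V i \<and> b \<in> V i \<and> a i \<noteq> b"
    using bchoice[OF categorical] by blast
  obtain b where b: "\<forall>i\<in>{1..C}. a i \<in> V i \<and> b i \<in> V i \<and> a i \<noteq> b i"
    using bchoice[OF a] by blast
  define x where "x = restrict a {1..C}"
  define y where "y = restrict b {1..C}"
  have xP: "x \<in> PiE {1..C} V" unfolding x_def using b by (simp add: restrict_PiE_iff)
  have yP: "y \<in> PiE {1..C} V" unfolding y_def using b by (simp add: restrict_PiE_iff)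
  have c1: "{i\<in>{1..C}. x i = x i} = {1..C}" by auto
  have c2: "{i\<in>{1..C}. y i = y i} = {1..C}" by auto
  have c3: "{i\<in>{1..C}. x i = y i} = {}" using b unfolding x_def y_def by auto
  have ixx: "inner (\<phi> x) (\<phi> x) = \<kappa> C" using comp_struct xP c1 by auto
  have iyy: "inner (\<phi> y) (\<phi> y) = \<kappa> C" using comp_struct yP c2 by auto
  have "inner (\<phi> x) (\<phi> y) = \<kappa> (card {i\<in>{1..C}. x i = y i})" using comp_struct xP yP by blast
  then have ixy: "inner (\<phi> x) (\<phi> y) = \<kappa> 0" unfolding c3 by simp
  have kC0: "\<kappa> C \<ge> 0" using ixx inner_ge_zero by metis
  have "\<bar>\<kappa> 0\<bar> \<le> norm (\<phi> x) * norm (\<phi> y)" using Cauchy_Schwarz_ineq2 ixy by metis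
  also have "\<dots> = sqrt (\<kappa> C) * sqrt (\<kappa> C)" by (simp add: norm_eq_sqrt_inner ixx iyy)
  also have "\<dots> = \<kappa> C" using kC0 by simp
  finally have k0abs: "\<bar>\<kappa> 0\<bar> \<le> \<kappa> C" .
  have kCpos: "\<kappa> C > 0" using k0abs ends by linarith
  define K1 where "K1 = (1 + A^2) / 2"
  define g where "g = (1 - A)^2 / (pi * (1 + A^2))"
  have K1pos: "K1 > 0" unfolding K1_def by (simp add: add_pos_nonneg)
  have g0: "0 < g" unfolding g_def using A by (simp add: add_pos_nonneg)
  have g1: "g \<le> 1 / pi"
  proof -
    have "(1 - A)^2 \<le> 1 + A^2" using A by (simp add: power2_eq_square algebra_simps)
    then have "(1 - A)^2 / (1 + A^2) \<le> 1" by (simp add: add_pos_nonneg)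
    then have "(1 - A)^2 / (1 + A^2) / pi \<le> 1 / pi" by (intro divide_right_mono) auto
    then show ?thesis unfolding g_def by (simp add: mult.commute)
  qed
  have karc: "\<And>u. karc A u = K1 * FF g u" unfolding K1_def g_def by (rule karc_FF)
  define \<rho> where "\<rho> k = \<kappa> k / \<kappa> C" for k
  define c where "c L = \<kappa> C * (s2 * K1) ^ L" for L :: nat
  have cpos: "\<And>L. c L > 0" unfolding c_def using kCpos s2 K1pos by simp
  have \<rho>C: "\<rho> C = 1" unfolding \<rho>_def using kCpos by simp
  have layer: "\<And>k. kappa_layer A s2 C \<kappa> L k = c L * (FF g ^^ L) (\<rho> k)" for L
  proof (induction L)
    case 0
    show ?case using kCpos unfolding c_def \<rho>_def by simp
  next
    case (Suc L)
    have lC: "kappa_layer A s2 C \<kappa> L C = c L" using Suc[of C] \<rho>C iter_1[OF g0 g1] by simp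
    have sq: "sqrt (c L * c L) = c L" using cpos[of L] by simp
    have "kappa_layer A s2 C \<kappa> (Suc L) k = s2 * c L * karc A ((FF g ^^ L) (\<rho> k))"
      using cpos[of L] by (simp add: lC sq Suc[of k])
    also have "\<dots> = c (Suc L) * (FF g ^^ Suc L) (\<rho> k)"
      unfolding karc c_def by simp
    finally show ?case .
  qed
  have \<rho>0: "-1 \<le> \<rho> 0" "\<rho> 0 < 1"
    unfolding \<rho>_def using k0abs ends kCpos by (simp_all add: field_simps)
  have \<rho>k: "\<rho> 0 \<le> \<rho> k \<and> \<rho> k < 1" if "k < C" for k
  proof (cases "k = 0")
    case True then show ?thesis using \<rho>0 by simp
  next
    case False
    then have "\<kappa> 0 < \<kappa> k" "\<kappa> k < \<kappa> C" using between that by auto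
    then show ?thesis unfolding \<rho>_def using kCpos by (simp add: field_simps)
  qed
  define e where "e L k = 1 - (FF g ^^ L) (\<rho> k)" for L k
  have e0pos: "e L 0 > 0" for L unfolding e_def using iter_range[OF g0 g1 \<rho>0] by simp
  define q where "q L k = e L k / e L 0" for L k
  have layer2: "kappa_layer A s2 C \<kappa> L = (\<lambda>k. c L + (- c L * e L 0) * q L k)" for L
  proof (rule ext)
    fix k
    have "e L 0 \<noteq> 0" using e0pos[of L] by simp
    then have "e L 0 * q L k = e L k" unfolding q_def by simp
    then have H: "(- c L * e L 0) * q L k = - c L * e L k" by (metis mult.assoc mult_minus_left)
    have "c L + (- c L * e L 0) * q L k = c L * (1 - e L k)" unfolding H by (simp add: algebra_simps)
    then have "c L + (- c L * e L 0) * q L k = c L * (FF g ^^ L) (\<rho> k)"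
      unfolding e_def by simp
    then show "kappa_layer A s2 C \<kappa> L k = c L + (- c L * e L 0) * q L k" using layer by simp
  qed
  have den: "(\<Sum>J'\<in>{J'. J' \<subseteq> {1..C} \<and> J' \<noteq> {}}. sbar (kappa_layer A s2 C \<kappa> L) J') = c L * e L 0" for L
  proof -
    have "(\<Sum>J'\<in>{J'. J' \<subseteq> {1..C} \<and> J' \<noteq> {}}. sbar (kappa_layer A s2 C \<kappa> L) J')
        = kappa_layer A s2 C \<kappa> L C - kappa_layer A s2 C \<kappa> L 0"
      using sbar_denom[of "{1..C}"] by simp
    also have "\<dots> = c L * e L 0" unfolding layer e_def using \<rho>C iter_1[OF g0 g1]
      by (simp add: algebra_simps)
    finally show ?thesis .
  qed
  have sal: "salience (kappa_layer A s2 C \<kappa> L) C J = - sbar (q L) J"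
    if "J \<subseteq> {1..C}" "J \<noteq> {}" for J L
  proof -
    have f: "finite J" using that finite_subset by blast
    have nz: "c L * e L 0 \<noteq> 0" using cpos[of L] e0pos[of L] by simp
    have "salience (kappa_layer A s2 C \<kappa> L) C J = sbar (kappa_layer A s2 C \<kappa> L) J / (c L * e L 0)"
      unfolding salience_def den ..
    also have "sbar (kappa_layer A s2 C \<kappa> L) J = (- c L * e L 0) * sbar (q L) J"
    proof -
      have "sbar (kappa_layer A s2 C \<kappa> L) J = sbar (\<lambda>k. c L + (- c L * e L 0) * q L k) J"
        by (simp only: layer2)
      also have "\<dots> = (if J = {} then c L else 0) + (- c L * e L 0) * sbar (q L) J"
        by (rule sbar_affine[OF f])
      finally show ?thesis using that(2) by (simp only: if_False add_0)
    qed
    finally show ?thesis using nz by simp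
  qed
  define r where "r k = (if k < C then 1 else 0 :: real)" for k
  have qlim: "(\<lambda>L. q L k) \<longlonglongrightarrow> r k" if "k \<le> C" for k
  proof (cases "k < C")
    case True
    have "(\<lambda>L. (1 - (FF g ^^ L) (\<rho> k)) / (1 - (FF g ^^ L) (\<rho> 0))) \<longlonglongrightarrow> 1"
      using ratio_cmp[OF g0 g1 \<rho>0(1)] \<rho>k[OF True] by blast
    then show ?thesis unfolding q_def e_def r_def using True by simp
  next
    case False
    then have "k = C" using that by simp
    then have "\<And>L. q L k = 0" unfolding q_def e_def using \<rho>C iter_1[OF g0 g1] by simp
    then show ?thesis unfolding r_def using \<open>k = C\<close> by simp
  qed
  have lim: "(\<lambda>L. salience (kappa_layer A s2 C \<kappa> L) C J) \<longlonglongrightarrow> - sbar r J"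
    if "J \<subseteq> {1..C}" "J \<noteq> {}" for J
  proof -
    have f: "finite J" using that finite_subset by blast
    have "card J \<le> C" using card_mono[OF _ that(1)] by simp
    then have "(\<lambda>L. sbar (q L) J) \<longlonglongrightarrow> sbar r J"
      using sbar_tendsto[OF f] qlim by simp
    then have "(\<lambda>L. - sbar (q L) J) \<longlonglongrightarrow> - sbar r J" by (rule tendsto_minus)
    then show ?thesis using sal[OF that] by simp
  qed
  have r1: "sbar r J = (if J = {} then 1 else 0)" if "finite J" "card J < C" for J
  proof -
    have "sbar r J = sbar (\<lambda>_. 1) J"
      by (rule sbar_cong[OF that(1)]) (use that(2) in \<open>simp add: r_def\<close>)
    then show ?thesis using sbar_const[OF that(1)] by simp
  qed
  have part1: "\<forall>J. J \<subseteq> {1..C} \<and> J \<noteq> {} \<and> card J < C \<longrightarrow>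
            (\<lambda>L. salience (kappa_layer A s2 C \<kappa> L) C J) \<longlonglongrightarrow> 0"
  proof (intro allI impI)
    fix J assume J: "J \<subseteq> {1..C} \<and> J \<noteq> {} \<and> card J < C"
    then have "finite J" using finite_subset[of J "{1..C}"] by blast
    then have "sbar r J = 0" using r1[of J] J by simp
    moreover have "(\<lambda>L. salience (kappa_layer A s2 C \<kappa> L) C J) \<longlonglongrightarrow> - sbar r J"
      using lim[of J] J by blast
    ultimately show "(\<lambda>L. salience (kappa_layer A s2 C \<kappa> L) C J) \<longlonglongrightarrow> 0" by simp
  qed
  have "(\<Sum>J'\<in>{J'. J' \<subset> {1..C}}. sbar r J') = (\<Sum>J'\<in>{J'. J' \<subset> {1..C}}. (if J' = {} then 1 else 0))"
  proof (rule sum.cong[OF refl])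
    fix J' assume "J' \<in> {J'. J' \<subset> {1..C}}"
    then have ps: "J' \<subset> {1..C}" by simp
    have f': "finite J'" using finite_subset[OF psubset_imp_subset[OF ps]] by simp
    have "card J' < card {1..C}" using psubset_card_mono[OF _ ps] by simp
    then have c': "card J' < C" by simp
    show "sbar r J' = (if J' = {} then 1 else 0)" by (rule r1[OF f' c'])
  qed
  also have "\<dots> = (if {} \<in> {J'. J' \<subset> {1..C}} then 1 else 0)"
    by (rule sum.delta[OF fin_psub]) simp
  also have "\<dots> = 1" using C_pos by auto
  finally have S1: "(\<Sum>J'\<in>{J'. J' \<subset> {1..C}}. sbar r J') = 1" .
  have "sbar r {1..C} = r (card {1..C}) - (\<Sum>J'\<in>{J'. J' \<subset> {1..C}}. sbar r J')"
    by (rule sbar_eq) simp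
  also have "\<dots> = -1" unfolding S1 by (simp add: r_def)
  finally have "sbar r {1..C} = -1" .
  moreover have "{1..C} \<noteq> {}" using C_pos by simp
  ultimately have part2: "(\<lambda>L. salience (kappa_layer A s2 C \<kappa> L) C {1..C}) \<longlonglongrightarrow> 1"
    using lim[of "{1..C}"] by simp
  show ?thesis using part1 part2 by blast
qed

end
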